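(* For the system $\dot x=f_\sigma(x)$ described in the context, for every $\sigma\in\{0,1\}^{|\tilde{\mathcal L}|}$ there exists $x^*$ with $f_\sigma(x^* )=0$. Moreover, every equilibrium $z^*=(x^*,\sigma)$ (i.e. $f_\sigma(x^* )=0$), with $x^*=(\eta^*,\omega^*,p^{M,*},p^{c,*},\psi^* )$, satisfies $\omega^*=\mathbf 0_{|\mathcal N|}$ and $p^{c,*}\in\operatorname{Im}(\mathbf 1_{|\mathcal N|})$.
   Context: Power network $(\mathcal N,\mathcal E)$: connected directed graph, $\mathcal N=\{1,\dots,|\mathcal N|\}$, arbitrarily oriented ($(i,j)\in\mathcal E\Rightarrow(j,i)\notin\mathcal E$), $\mathcal N^p_j=\{k:(k,j)\in\mathcal E\}$, $\mathcal N^s_j=\{k:(j,k)\in\mathcal E\}$; communication network $(\mathcal N,\tilde{\mathcal E})$ connected directed. For $j\in\mathcal N$, $\mathcal L_j$ is a finite set of on-off loads, $\tilde{\mathcal L}=\{(l,j):l\in\mathcal L_j,j\in\mathcal N\}$, load magnitudes $\overline d_{l,j}>0$. Constants $M_j,\gamma_j,\kappa_j,A_j,\tau_j>0$, $p^L_j\in\mathbb R$, $B_{ij}>0$ ($(i,j)\in\mathcal E$), $\tau_{ij}>0$ ($(i,j)\in\tilde{\mathcal E}$). For $x=(\eta,\omega,p^M,p^c,\psi)\in\mathbb R^n$, $n=3|\mathcal N|+|\mathcal E|+|\tilde{\mathcal E}|$, and $\sigma\in\{0,1\}^{|\tilde{\mathcal L}|}$, $f_\sigma(x)$ is the vector field given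 by $\dot\eta_{ij}=\omega_i-\omega_j$ ($(i,j)\in\mathcal E$); $M_j\dot\omega_j=p^M_j-p^L_j-A_j\omega_j-\sum_{l\in\mathcal L_j}\overline d_{l,j}\sigma_{l,j}-\sum_{k\in\mathcal N^s_j}B_{jk}\eta_{jk}+\sum_{i\in\mathcal N^p_j}B_{ij}\eta_{ij}$; $\gamma_j\dot p^M_j=-(p^M_j+\kappa_j\omega_j-\kappa_jp^c_j)$; $\tau_{ij}\dot\psi_{ij}=p^c_i-p^c_j$ ($(i,j)\in\tilde{\mathcal E}$); $\tau_j\dot p^c_j=-p^M_j+p^L_j+\sum_{l\in\mathcal L_j}\overline d_{l,j}\sigma_{l,j}-\sum_{k:(j,k)\in\tilde{\mathcal E}}\psi_{jk}+\sum_{i:(i,j)\in\tilde{\mathcal E}}\psi_{ij}$. *)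

theory Defs
  imports Complex_Main
begin

text \<open>Nodes are 1..nn (nn = |N|). A state x = (eta, omega, pM, pc, psi) is represented by
functions: eta indexed by power lines (edges in E), omega, pM, pc indexed by nodes,
psi indexed by communication edges (edges in Et). Loads: L j is the set of on-off loads
at bus j, dbar l j their magnitudes, sigma (l,j) the switching state in {0,1}.\<close>

definition weakly_connected :: "nat set \<Rightarrow> (nat \<times> nat) set \<Rightarrow> bool" where
  "weakly_connected V R \<longleftrightarrow> R \<subseteq> V \<times> V \<and>
     (\<forall>i\<in>V. \<forall>j\<in>V. (i, j) \<in> (R \<union> R\<inverse>)\<^sup>*)"

definition load_sum :: "(nat \<Rightarrow> 'l set) \<Rightarrow> ('l \<Rightarrow> nat \<Rightarrow> real) \<Rightarrow> ('l \<times> nat \<Rightarrow> real) \<Rightarrow> nat \<Rightarrow> real" where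
  "load_sum L dbar \<sigma> j = (\<Sum>l\<in>L j. dbar l j * \<sigma> (l, j))"

definition fsys ::
  "nat \<Rightarrow> (nat \<times> nat) set \<Rightarrow> (nat \<times> nat) set \<Rightarrow> (nat \<Rightarrow> 'l set) \<Rightarrow> ('l \<Rightarrow> nat \<Rightarrow> real)
   \<Rightarrow> (nat \<Rightarrow> real) \<Rightarrow> (nat \<Rightarrow> real) \<Rightarrow> (nat \<Rightarrow> real) \<Rightarrow> (nat \<Rightarrow> real) \<Rightarrow> (nat \<Rightarrow> real) \<Rightarrow> (nat \<Rightarrow> real)
   \<Rightarrow> (nat \<times> nat \<Rightarrow> real) \<Rightarrow> (nat \<times> nat \<Rightarrow> real)
   \<Rightarrow> ('l \<times> nat \<Rightarrow> real)
   \<Rightarrow> (nat \<times> nat \<Rightarrow> real) \<times> (nat \<Rightarrow> real) \<times> (nat \<Rightarrow> real) \<times> (nat \<Rightarrow> real) \<times> (nat \<times> nat \<Rightarrow> real)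
   \<Rightarrow> (nat \<times> nat \<Rightarrow> real) \<times> (nat \<Rightarrow> real) \<times> (nat \<Rightarrow> real) \<times> (nat \<Rightarrow> real) \<times> (nat \<times> nat \<Rightarrow> real)"
  where
  "fsys nn E Et L dbar M \<gamma> \<kappa> A \<tau> pL B \<tau>c \<sigma> x =
     (case x of (\<eta>, \<omega>, pM, pc, \<psi>) \<Rightarrow>
       ((\<lambda>(i, j). \<omega> i - \<omega> j),
        (\<lambda>j. (pM j - pL j - A j * \<omega> j - load_sum L dbar \<sigma> j
               - (\<Sum>k\<in>{k\<in>{1..nn}. (j, k) \<in> E}. B (j, k) * \<eta> (j, k))
               + (\<Sum>i\<in>{i\<in>{1..nn}. (i, j) \<in> E}. B (i, j) * \<eta> (i, j))) / M j),
        (\<lambda>j. - (pM j + \<kappa> j * \<omega> j - \<kappa> j * pc j) / \<gamma> j),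
        (\<lambda>j. (- pM j + pL j + load_sum L dbar \<sigma> j
               - (\<Sum>k\<in>{k\<in>{1..nn}. (j, k) \<in> Et}. \<psi> (j, k))
               + (\<Sum>i\<in>{i\<in>{1..nn}. (i, j) \<in> Et}. \<psi> (i, j))) / \<tau> j),
        (\<lambda>(i, j). (pc i - pc j) / \<tau>c (i, j))))"

definition is_equilibrium where
  "is_equilibrium nn E Et L dbar M \<gamma> \<kappa> A \<tau> pL B \<tau>c \<sigma> x \<longleftrightarrow>
     (case fsys nn E Et L dbar M \<gamma> \<kappa> A \<tau> pL B \<tau>c \<sigma> x of (d\<eta>, d\<omega>, dpM, dpc, d\<psi>) \<Rightarrow>
        (\<forall>e\<in>E. d\<eta> e = 0) \<and> (\<forall>j\<in>{1..nn}. d\<omega> j = 0) \<and> (\<forall>j\<in>{1..nn}. dpM j = 0)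
        \<and> (\<forall>j\<in>{1..nn}. dpc j = 0) \<and> (\<forall>e\<in>Et. d\<psi> e = 0))"

end

theory Submission
  imports Defs
begin

definition divg :: "nat set \<Rightarrow> (nat \<times> nat) set \<Rightarrow> (nat \<times> nat \<Rightarrow> real) \<Rightarrow> nat \<Rightarrow> real" where
  "divg V R \<phi> j = (\<Sum>k\<in>{k\<in>V. (j, k) \<in> R}. \<phi> (j, k)) - (\<Sum>i\<in>{i\<in>V. (i, j) \<in> R}. \<phi> (i, j))"

lemma divg_add_edge:
  assumes "finite V" "R \<subseteq> V \<times> V" "(a, b) \<in> R"
  shows "divg V R (\<lambda>e. \<phi> e + c * (if e = (a, b) then 1 else 0)) i
         = divg V R \<phi> i + (if i = a then c else 0) - (if i = b then c else 0)"
proof -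
  have fin1: "finite {k\<in>V. (i, k) \<in> R}" "finite {k\<in>V. (k, i) \<in> R}" using assms(1) by auto
  have s1: "(\<Sum>k\<in>{k\<in>V. (i, k) \<in> R}. c * (if (i, k) = (a, b) then 1 else 0)) = (if i = a then c else 0)"
  proof (cases "i = a")
    case True
    then have "b \<in> {k\<in>V. (i, k) \<in> R}" using assms by auto
    then show ?thesis using True fin1 by (simp add: sum.delta' if_distrib[of "(*) c"] cong: if_cong)
  qed auto
  have s2: "(\<Sum>k\<in>{k\<in>V. (k, i) \<in> R}. c * (if (k, i) = (a, b) then 1 else 0)) = (if i = b then c else 0)"
  proof (cases "i = b")
    case True
    then have "a \<in> {k\<in>V. (k, i) \<in> R}" using assms by auto
    then show ?thesis using True fin1 by (simp add: sum.delta' if_distrib[of "(*) c"] cong: if_cong)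
  qed auto
  show ?thesis unfolding divg_def using s1 s2 by (simp add: sum.distrib)
qed

lemma divg_lin:
  assumes "finite V" "finite J"
  shows "divg V R (\<lambda>e. \<Sum>j\<in>J. c j * F j e) i = (\<Sum>j\<in>J. c j * divg V R (F j) i)"
  unfolding divg_def using assms
  by (simp add: sum_subtractf right_diff_distrib sum_distrib_left sum.swap[of _ J])

lemma divg_sum0:
  assumes "finite V" "R \<subseteq> V \<times> V"
  shows "(\<Sum>i\<in>V. divg V R \<phi> i) = 0"
  unfolding divg_def using assms
  by (simp add: sum_subtractf sum.swap_restrict[of V V "\<lambda>i k. \<phi> (i,k)"])

lemma unit_flow:
  assumes "finite V" "R \<subseteq> V \<times> V" "(u, v) \<in> (R \<union> R\<inverse>)\<^sup>*"
  shows "\<exists>\<phi>. \<forall>i. divg V R \<phi> i = (if i = u then 1 else 0) - (if i = v then 1 else 0)"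
  using assms(3)
proof (induction rule: rtrancl_induct)
  case base
  show ?case by (rule exI[of _ "\<lambda>_. 0"]) (simp add: divg_def)
next
  case (step m v)
  then obtain \<phi> where ph: "\<forall>i. divg V R \<phi> i = (if i = u then 1 else 0) - (if i = m then 1 else 0)" by blast
  from step(2) show ?case
  proof
    assume "(m, v) \<in> R"
    have "divg V R (\<lambda>e. \<phi> e + 1 * (if e = (m, v) then 1 else 0)) i = (if i = u then 1 else 0) - (if i = v then 1 else 0)" for i
      using divg_add_edge[OF assms(1,2) \<open>(m, v) \<in> R\<close>, of \<phi> 1 i] ph[rule_format, of i] by simp
    then show ?thesis by blast
  next
    assume "(m, v) \<in> R\<inverse>"
    then have "(v, m) \<in> R" by simp
    have "divg V R (\<lambda>e. \<phi> e + (-1) * (if e = (v, m) then 1 else 0)) i = (if i = u then 1 else 0) - (if i = v then 1 else 0)" for i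
      using divg_add_edge[OF assms(1,2) \<open>(v, m) \<in> R\<close>, of \<phi> "-1" i] ph[rule_format, of i] by simp
    then show ?thesis by blast
  qed
qed

lemma flow_exists:
  assumes "finite V" "weakly_connected V R" "r \<in> V" "(\<Sum>i\<in>V. b i) = 0"
  shows "\<exists>\<phi>. \<forall>i\<in>V. divg V R \<phi> i = b i"
proof -
  have R: "R \<subseteq> V \<times> V" and c: "\<forall>i\<in>V. \<forall>j\<in>V. (i, j) \<in> (R \<union> R\<inverse>)\<^sup>*"
    using assms(2) unfolding weakly_connected_def by auto
  have "\<forall>j\<in>V. \<exists>\<phi>. \<forall>i. divg V R \<phi> i = (if i = j then 1 else 0) - (if i = r then 1 else 0)"
    using unit_flow[OF assms(1) R] c assms(3) by blast
  then obtain F where F: "\<forall>j\<in>V. \<forall>i. divg V R (F j) i = (if i = j then 1 else 0) - (if i = r then 1 else 0)"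
    by metis
  show ?thesis
  proof (rule exI[of _ "\<lambda>e. \<Sum>j\<in>V. b j * F j e"], intro ballI)
    fix i assume i: "i \<in> V"
    have "divg V R (\<lambda>e. \<Sum>j\<in>V. b j * F j e) i = (\<Sum>j\<in>V. b j * ((if i = j then 1 else 0) - (if i = r then 1 else 0)))"
      using divg_lin[OF assms(1) assms(1)] F by simp
    also have "\<dots> = (\<Sum>j\<in>V. (if i = j then b j else 0)) - (\<Sum>j\<in>V. b j) * (if i = r then 1 else 0)"
      by (simp add: right_diff_distrib sum_subtractf sum_distrib_right) (rule sum.cong, auto)
    also have "\<dots> = b i" using i assms(1,4) by simp
    finally show "divg V R (\<lambda>e. \<Sum>j\<in>V. b j * F j e) i = b i" .
  qed
qed

lemma const_on:
  assumes "weakly_connected V R" "r \<in> V" "\<forall>(i, j)\<in>R. f i = f j"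
  shows "\<forall>j\<in>V. f j = f r"
proof
  fix j assume "j \<in> V"
  then have "(r, j) \<in> (R \<union> R\<inverse>)\<^sup>*" using assms(1,2) unfolding weakly_connected_def by auto
  then show "f j = f r"
    by (induction rule: rtrancl_induct) (use assms(3) in auto)
qed


lemma equil_unfold: "is_equilibrium nn E Et L dbar M \<gamma> \<kappa> A \<tau> pL B \<tau>c \<sigma> (\<eta>, \<omega>, pM, pc, \<psi>) \<longleftrightarrow>
      (\<forall>e\<in>E. (\<lambda>(i, j). \<omega> i - \<omega> j) e = 0) \<and> (\<forall>j\<in>{1..nn}. (pM j - pL j - A j * \<omega> j - load_sum L dbar \<sigma> j
               - (\<Sum>k\<in>{k\<in>{1..nn}. (j, k) \<in> E}. B (j, k) * \<eta> (j, k))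
               + (\<Sum>i\<in>{i\<in>{1..nn}. (i, j) \<in> E}. B (i, j) * \<eta> (i, j))) / M j = 0) \<and> (\<forall>j\<in>{1..nn}. - (pM j + \<kappa> j * \<omega> j - \<kappa> j * pc j) / \<gamma> j = 0)
      \<and> (\<forall>j\<in>{1..nn}. (- pM j + pL j + load_sum L dbar \<sigma> j
               - (\<Sum>k\<in>{k\<in>{1..nn}. (j, k) \<in> Et}. \<psi> (j, k))
               + (\<Sum>i\<in>{i\<in>{1..nn}. (i, j) \<in> Et}. \<psi> (i, j))) / \<tau> j = 0) \<and> (\<forall>e\<in>Et. (\<lambda>(i, j). (pc i - pc j) / \<tau>c (i, j)) e = 0)"
  unfolding is_equilibrium_def fsys_def by (simp only: prod.case)

theorem lemma3:
  fixes nn :: nat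
    and E Et :: "(nat \<times> nat) set"
    and L :: "nat \<Rightarrow> 'l set"
    and dbar :: "'l \<Rightarrow> nat \<Rightarrow> real"
    and M \<gamma> \<kappa> A \<tau> pL :: "nat \<Rightarrow> real"
    and B \<tau>c :: "nat \<times> nat \<Rightarrow> real"
  assumes nn_pos: "nn \<ge> 1"
    and E_conn: "weakly_connected {1..nn} E"
    and E_orient: "\<forall>i j. (i, j) \<in> E \<longrightarrow> (j, i) \<notin> E"
    and Et_conn: "weakly_connected {1..nn} Et"
    and L_fin: "\<forall>j\<in>{1..nn}. finite (L j)"
    and dbar_pos: "\<forall>j\<in>{1..nn}. \<forall>l\<in>L j. dbar l j > 0"
    and pos: "\<forall>j\<in>{1..nn}. M j > 0 \<and> \<gamma> j > 0 \<and> \<kappa> j > 0 \<and> A j > 0 \<and> \<tau> j > 0"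
    and B_pos: "\<forall>e\<in>E. B e > 0"
    and \<tau>c_pos: "\<forall>e\<in>Et. \<tau>c e > 0"
  shows "(\<forall>\<sigma> :: 'l \<times> nat \<Rightarrow> real.
            (\<forall>j\<in>{1..nn}. \<forall>l\<in>L j. \<sigma> (l, j) \<in> {0, 1}) \<longrightarrow>
            (\<exists>x. is_equilibrium nn E Et L dbar M \<gamma> \<kappa> A \<tau> pL B \<tau>c \<sigma> x))
       \<and> (\<forall>\<sigma> :: 'l \<times> nat \<Rightarrow> real. \<forall>\<eta> \<omega> pM pc \<psi>.
            (\<forall>j\<in>{1..nn}. \<forall>l\<in>L j. \<sigma> (l, j) \<in> {0, 1}) \<longrightarrow>
            is_equilibrium nn E Et L dbar M \<gamma> \<kappa> A \<tau> pL B \<tau>c \<sigma> (\<eta>, \<omega>, pM, pc, \<psi>) \<longrightarrow>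
            (\<forall>j\<in>{1..nn}. \<omega> j = 0) \<and> (\<exists>c. \<forall>j\<in>{1..nn}. pc j = c))"

proof -
  let ?V = "{1..nn}"
  have finV: "finite ?V" by simp
  have r: "1 \<in> ?V" using nn_pos by simp
  have ER: "E \<subseteq> ?V \<times> ?V" and EtR: "Et \<subseteq> ?V \<times> ?V"
    using E_conn Et_conn unfolding weakly_connected_def by auto
  have Mp: "\<And>j. j \<in> ?V \<Longrightarrow> M j > 0" and gp: "\<And>j. j \<in> ?V \<Longrightarrow> \<gamma> j > 0"
   and kp: "\<And>j. j \<in> ?V \<Longrightarrow> \<kappa> j > 0" and Ap: "\<And>j. j \<in> ?V \<Longrightarrow> A j > 0"
   and tp: "\<And>j. j \<in> ?V \<Longrightarrow> \<tau> j > 0" using pos by auto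
  define D where "D = load_sum L dbar"
  have eqv: "is_equilibrium nn E Et L dbar M \<gamma> \<kappa> A \<tau> pL B \<tau>c \<sigma> (\<eta>, \<omega>, pM, pc, \<psi>) \<longleftrightarrow>
     (\<forall>(i,j)\<in>E. \<omega> i = \<omega> j) \<and>
     (\<forall>j\<in>?V. pM j - pL j - A j * \<omega> j - D \<sigma> j - divg ?V E (\<lambda>e. B e * \<eta> e) j = 0) \<and>
     (\<forall>j\<in>?V. pM j + \<kappa> j * \<omega> j - \<kappa> j * pc j = 0) \<and>
     (\<forall>j\<in>?V. - pM j + pL j + D \<sigma> j - divg ?V Et \<psi> j = 0) \<and>
     (\<forall>(i,j)\<in>Et. pc i = pc j)" for \<sigma> \<eta> \<omega> pM pc \<psi>
  proof -
    have a: "(\<forall>j\<in>?V. X j / M j = 0) \<longleftrightarrow> (\<forall>j\<in>?V. X j = 0)" for X using Mp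
      by (metis divide_eq_0_iff less_irrefl)
    have b: "(\<forall>j\<in>?V. - X j / \<gamma> j = 0) \<longleftrightarrow> (\<forall>j\<in>?V. X j = 0)" for X using gp
      by (metis divide_eq_0_iff less_irrefl neg_equal_0_iff_equal)
    have c: "(\<forall>j\<in>?V. X j / \<tau> j = 0) \<longleftrightarrow> (\<forall>j\<in>?V. X j = 0)" for X using tp
      by (metis divide_eq_0_iff less_irrefl)
    have d: "(\<forall>e\<in>Et. (\<lambda>(i, j). (pc i - pc j) / \<tau>c (i, j)) e = 0) \<longleftrightarrow> (\<forall>(i,j)\<in>Et. pc i = pc j)"
      using \<tau>c_pos by fastforce
    have step: "is_equilibrium nn E Et L dbar M \<gamma> \<kappa> A \<tau> pL B \<tau>c \<sigma> (\<eta>, \<omega>, pM, pc, \<psi>) \<longleftrightarrow>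
      (\<forall>e\<in>E. (\<lambda>(i, j). \<omega> i - \<omega> j) e = 0) \<and> (\<forall>j\<in>?V. (pM j - pL j - A j * \<omega> j - load_sum L dbar \<sigma> j
               - (\<Sum>k\<in>{k\<in>{1..nn}. (j, k) \<in> E}. B (j, k) * \<eta> (j, k))
               + (\<Sum>i\<in>{i\<in>{1..nn}. (i, j) \<in> E}. B (i, j) * \<eta> (i, j))) / M j = 0) \<and> (\<forall>j\<in>?V. - (pM j + \<kappa> j * \<omega> j - \<kappa> j * pc j) / \<gamma> j = 0)
      \<and> (\<forall>j\<in>?V. (- pM j + pL j + load_sum L dbar \<sigma> j
               - (\<Sum>k\<in>{k\<in>{1..nn}. (j, k) \<in> Et}. \<psi> (j, k))
               + (\<Sum>i\<in>{i\<in>{1..nn}. (i, j) \<in> Et}. \<psi> (i, j))) / \<tau> j = 0) \<and> (\<forall>e\<in>Et. (\<lambda>(i, j). (pc i - pc j) / \<tau>c (i, j)) e = 0)"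
      by (rule equil_unfold)
    have e1: "(\<forall>e\<in>E. (\<lambda>(i, j). \<omega> i - \<omega> j) e = 0) \<longleftrightarrow> (\<forall>(i,j)\<in>E. \<omega> i = \<omega> j)" by auto
    have x1: "\<And>j. (pM j - pL j - A j * \<omega> j - load_sum L dbar \<sigma> j
               - (\<Sum>k\<in>{k\<in>{1..nn}. (j, k) \<in> E}. B (j, k) * \<eta> (j, k))
               + (\<Sum>i\<in>{i\<in>{1..nn}. (i, j) \<in> E}. B (i, j) * \<eta> (i, j))) = pM j - pL j - A j * \<omega> j - D \<sigma> j - divg ?V E (\<lambda>e. B e * \<eta> e) j"
      unfolding divg_def D_def by simp
    have x3: "\<And>j. (- pM j + pL j + load_sum L dbar \<sigma> j
               - (\<Sum>k\<in>{k\<in>{1..nn}. (j, k) \<in> Et}. \<psi> (j, k))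
               + (\<Sum>i\<in>{i\<in>{1..nn}. (i, j) \<in> Et}. \<psi> (i, j))) = - pM j + pL j + D \<sigma> j - divg ?V Et \<psi> j"
      unfolding divg_def D_def by simp
    show ?thesis unfolding step a b c d e1 x1 x3 by (rule refl)
  qed
  have part1: "\<exists>x. is_equilibrium nn E Et L dbar M \<gamma> \<kappa> A \<tau> pL B \<tau>c \<sigma> x" for \<sigma>
  proof -
    have kpos: "sum \<kappa> ?V > 0" by (intro sum_pos) (use kp nn_pos in auto)
    define c where "c = (\<Sum>j\<in>?V. pL j + D \<sigma> j) / sum \<kappa> ?V"
    define pM where "pM = (\<lambda>j. \<kappa> j * c)"
    define b where "b = (\<lambda>j. pM j - pL j - D \<sigma> j)"
    have "(\<Sum>j\<in>?V. b j) = (\<Sum>j\<in>?V. \<kappa> j) * c - (\<Sum>j\<in>?V. pL j + D \<sigma> j)"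
      unfolding b_def pM_def by (simp add: sum_subtractf sum.distrib sum_distrib_right)
    also have "\<dots> = 0" unfolding c_def using kpos by simp
    finally have "(\<Sum>j\<in>?V. b j) = 0" .
    then have b0: "(\<Sum>j\<in>?V. b j) = 0" "(\<Sum>j\<in>?V. - b j) = 0" by (simp_all add: sum_negf)
    obtain \<phi> where ph: "\<forall>i\<in>?V. divg ?V E \<phi> i = b i" using flow_exists[OF finV E_conn r b0(1)] by blast
    obtain \<psi> where ps: "\<forall>i\<in>?V. divg ?V Et \<psi> i = - b i" using flow_exists[OF finV Et_conn r b0(2)] by blast
    define \<eta> where "\<eta> = (\<lambda>e. \<phi> e / B e)"
    have "divg ?V E (\<lambda>e. B e * \<eta> e) j = divg ?V E \<phi> j" for j
    proof -
      have "B (j,k) * \<eta> (j,k) = \<phi> (j,k)" if "(j,k) \<in> E" for k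
        proof -
        have "B (j,k) \<noteq> 0" using B_pos that by force
        then show ?thesis unfolding \<eta>_def by simp
      qed
      moreover have "B (k,j) * \<eta> (k,j) = \<phi> (k,j)" if "(k,j) \<in> E" for k
        proof -
        have "B (k,j) \<noteq> 0" using B_pos that by force
        then show ?thesis unfolding \<eta>_def by simp
      qed
      ultimately show ?thesis unfolding divg_def by (intro arg_cong2[where f="(-)"] sum.cong) auto
    qed
    then have "is_equilibrium nn E Et L dbar M \<gamma> \<kappa> A \<tau> pL B \<tau>c \<sigma> (\<eta>, \<lambda>_. 0, pM, \<lambda>_. c, \<psi>)"
      unfolding eqv using ph ps by (simp add: b_def pM_def)
    then show ?thesis by blast
  qed
  have part2: "(\<forall>j\<in>?V. \<omega> j = 0) \<and> (\<exists>c. \<forall>j\<in>?V. pc j = c)"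
    if eq: "is_equilibrium nn E Et L dbar M \<gamma> \<kappa> A \<tau> pL B \<tau>c \<sigma> (\<eta>, \<omega>, pM, pc, \<psi>)" for \<sigma> \<eta> \<omega> pM pc \<psi>
  proof -
    have eE: "\<forall>(i,j)\<in>E. \<omega> i = \<omega> j" using eq[unfolded eqv] by (elim conjE)
    have eM: "\<forall>j\<in>?V. pM j - pL j - A j * \<omega> j - D \<sigma> j - divg ?V E (\<lambda>e. B e * \<eta> e) j = 0"
      using eq[unfolded eqv] by (elim conjE)
    have eC: "\<forall>j\<in>?V. - pM j + pL j + D \<sigma> j - divg ?V Et \<psi> j = 0"
      using eq[unfolded eqv] by (elim conjE)
    have eT: "\<forall>(i,j)\<in>Et. pc i = pc j" using eq[unfolded eqv] by (elim conjE)
    have wc: "\<forall>j\<in>?V. \<omega> j = \<omega> 1" by (rule const_on[OF E_conn r eE])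
    have pcc: "\<forall>j\<in>?V. pc j = pc 1" by (rule const_on[OF Et_conn r eT])
    have all: "\<forall>j\<in>?V. A j * \<omega> 1 = - divg ?V E (\<lambda>e. B e * \<eta> e) j - divg ?V Et \<psi> j"
    proof
      fix j assume j: "j \<in> ?V"
      have h1: "pM j - pL j - A j * \<omega> j - D \<sigma> j - divg ?V E (\<lambda>e. B e * \<eta> e) j = 0"
        using eM j by blast
      have h2: "- pM j + pL j + D \<sigma> j - divg ?V Et \<psi> j = 0" using eC j by blast
      have h3: "\<omega> j = \<omega> 1" using wc j by blast
      show "A j * \<omega> 1 = - divg ?V E (\<lambda>e. B e * \<eta> e) j - divg ?V Et \<psi> j"
        using h1 h2 unfolding h3 by linarith
    qed
    have "(\<Sum>j\<in>?V. A j * \<omega> 1) = (\<Sum>j\<in>?V. - divg ?V E (\<lambda>e. B e * \<eta> e) j - divg ?V Et \<psi> j)"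
      using all by (intro sum.cong refl) blast
    also have "\<dots> = 0" using divg_sum0[OF finV ER] divg_sum0[OF finV EtR]
      by (simp add: sum_subtractf sum_negf)
    finally have "sum A ?V * \<omega> 1 = 0" by (simp add: sum_distrib_right)
    moreover have "sum A ?V > 0" by (intro sum_pos) (use Ap nn_pos in auto)
    ultimately have "\<omega> 1 = 0" by simp
    then have "\<forall>j\<in>?V. \<omega> j = 0" using wc by metis
    moreover have "\<exists>c. \<forall>j\<in>?V. pc j = c" using pcc by blast
    ultimately show ?thesis by blast
  qed
  show ?thesis using part1 part2 by blast
qed

end
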